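(* Let $x_0>0$ and $v_0>0$. For each $\alpha\in[-\pi,\pi]$, consider the closed curve $$E_\alpha:\quad x = x_0 \cos t + v_0 \cos \alpha \,\sin t,\qquad y = v_0 \sin \alpha\, \sin t,\qquad 0 \le t \le 2\pi,$$ which is the trajectory of the planar free harmonic oscillator $x''+x=0,\ y''+y=0$ with initial position $(x_0,0)$ and initial velocity $(v_0\cos\alpha, v_0\sin\alpha)$. It is an ellipse centered at the origin, or a segment when $\sin\alpha=0$. Then, as $\alpha$ ranges over $[-\pi,\pi]$, the foci of the curves $E_\alpha$ trace the Cassini oval with Cartesian equation $$[(x + x_0)^2 + y^2]\,[(x - x_0)^2 + y^2] = v_0^4,$$ equivalently $$(x^2 + y^2)^2 - 2x_0^2(x^2 - y^2) = v_0^4 - x_0^4,$$ and polar equation $$r^4 - 2x_0^2 r^2 \cos 2\theta = v_0^4 - x_0^4 .$$ This Cassini oval lies symmetrically inside the ellipse of safety $$\frac{x^2}{x_0^2+v_0^2}+\frac{y^2}{v_0^2}=1 .$$ In particular, when $x_0 = v_0$ the locus of the foci is Bernoulli's lemniscate, with Cartesian equation $$(x^2 + y^2)^2 = 2x_0^2(x^2 - y^2)$$ and polar equation $$r^2 = 2x_0^2 \cos 2\theta,\qquad -\tfrac{\pi}{4}\le\theta\le\tfrac{\pi}{4}.$$ Moreover, in this case $\alpha = 2\theta$, where $\theta$ is the polar angle of the focus, so the lemniscate is given by $$r^2 = 2x_0^2\cos\alpha,\qquad -\tfrac{\pi}{2}\le\alpha\le\tfrac{\pi}{2}.$$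
   Context: The ellipse of safety is the envelope of the family of curves $E_\alpha$: its complement's exterior is the set of points not reached by any trajectory. When $\sin\alpha=0$ the curve $E_\alpha$ degenerates to the segment from $(-\sqrt{x_0^2+v_0^2},0)$ to $(\sqrt{x_0^2+v_0^2},0)$, and its foci are taken to be the endpoints of that segment. A Cassini oval with foci $(\pm\lambda,0)$ is the set of points whose distances to these two foci have constant product $\mu^2$. Polar coordinates are $x=r\cos\theta$, $y=r\sin\theta$. *)

theory Defs
  imports "HOL-Analysis.Analysis"
begin

text \<open>The trajectory E_alpha of the planar free harmonic oscillator, as a point set in the plane
  (points are pairs (x,y); dist on real \<times> real is the Euclidean distance).\<close>
definition E_curve :: "real \<Rightarrow> real \<Rightarrow> real \<Rightarrow> (real \<times> real) set" where
  "E_curve x0 v0 \<alpha> =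
     {(x0 * cos t + v0 * cos \<alpha> * sin t, v0 * sin \<alpha> * sin t) | t. 0 \<le> t \<and> t \<le> 2 * pi}"

text \<open>For a segment this makes the foci its endpoints,
  matching the convention of the paper; for a circle both foci are the centre.\<close>
definition foci_of :: "(real \<times> real) set \<Rightarrow> real \<times> real \<Rightarrow> real \<times> real \<Rightarrow> bool" where
  "foci_of S F1 F2 \<longleftrightarrow> (\<exists>a. S = {P. dist P F1 + dist P F2 = a})"

definition focus_locus :: "real \<Rightarrow> real \<Rightarrow> (real \<times> real) set" where
  "focus_locus x0 v0 =
     {F. \<exists>\<alpha>. -pi \<le> \<alpha> \<and> \<alpha> \<le> pi \<and> (\<exists>F'. foci_of (E_curve x0 v0 \<alpha>) F F')}"

end

theory Submission
  imports Defs
begin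

lemma distP: "dist (a::real, b::real) (c, d) = sqrt ((a - c)^2 + (b - d)^2)"
  by (simp add: dist_Pair_Pair dist_real_def)

definition Ec :: "real \<Rightarrow> real \<Rightarrow> real \<Rightarrow> (real \<times> real) set" where
  "Ec c u w = {(c * cos t + u * sin t, w * sin t) | t. 0 \<le> t \<and> t \<le> 2 * pi}"

lemma E_Ec: "E_curve x0 v0 \<alpha> = Ec x0 (v0 * cos \<alpha>) (v0 * sin \<alpha>)"
  unfolding E_curve_def Ec_def by (simp add: mult.assoc)

lemma Ec_mem: "0 \<le> t \<Longrightarrow> t \<le> 2*pi \<Longrightarrow> (c * cos t + u * sin t, w * sin t) \<in> Ec c u w"
  unfolding Ec_def by blast

lemma Ec_pts:
  "(c, 0) \<in> Ec c u w" "(-c, 0) \<in> Ec c u w" "(u, w) \<in> Ec c u w" "(-u, -w) \<in> Ec c u w"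
  "(c * (sqrt 2 / 2) + u * (sqrt 2 / 2), w * (sqrt 2 / 2)) \<in> Ec c u w"
proof -
  show "(c, 0) \<in> Ec c u w" using Ec_mem[of 0 c u w] by simp
  show "(-c, 0) \<in> Ec c u w" using Ec_mem[of pi c u w] by simp
  show "(u, w) \<in> Ec c u w" using Ec_mem[of "pi/2" c u w] by simp
  have "(c * cos (3/2*pi) + u * sin (3/2*pi), w * sin (3/2*pi)) \<in> Ec c u w" by (rule Ec_mem) simp_all
  thus "(-u, -w) \<in> Ec c u w" by (simp only: cos_3over2_pi sin_3over2_pi) simp
  show "(c * (sqrt 2 / 2) + u * (sqrt 2 / 2), w * (sqrt 2 / 2)) \<in> Ec c u w"
    using Ec_mem[of "pi/4" c u w] by (simp only: cos_45 sin_45) (simp add: pi_ge_zero)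
qed

lemma G1:
  fixes q1 q2 h1 h2 a :: real
  assumes "sqrt ((q1-h1)^2+(q2-h2)^2) + sqrt ((q1+h1)^2+(q2+h2)^2) = a" "a > 0"
  shows "a^2 * ((q1^2+q2^2) + (h1^2+h2^2)) = a^4/4 + 4*(q1*h1+q2*h2)^2"
proof -
  define d1 where "d1 = sqrt ((q1-h1)^2+(q2-h2)^2)"
  define d2 where "d2 = sqrt ((q1+h1)^2+(q2+h2)^2)"
  have s1: "d1^2 = (q1-h1)^2+(q2-h2)^2" unfolding d1_def by simp
  have s2: "d2^2 = (q1+h1)^2+(q2+h2)^2" unfolding d2_def by simp
  have sum: "d1 + d2 = a" using assms(1) unfolding d1_def d2_def .
  have "(d1 - d2) * a = d1^2 - d2^2" by (simp add: sum[symmetric] power2_eq_square algebra_simps)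
  also have "\<dots> = -4*(q1*h1+q2*h2)" using s1 s2 by (simp add: power2_eq_square algebra_simps)
  finally have dif: "(d1 - d2) * a = -4*(q1*h1+q2*h2)" .
  have "2 * d1 * a = a^2 - 4*(q1*h1+q2*h2)"
  proof -
    have "a*(d1+d2) = a*a" using sum by simp
    thus ?thesis using dif by (simp add: power2_eq_square algebra_simps)
  qed
  hence "(2 * d1 * a)^2 = (a^2 - 4*(q1*h1+q2*h2))^2" by simp
  hence "4 * d1^2 * a^2 = (a^2 - 4*(q1*h1+q2*h2))^2" by (simp add: power_mult_distrib)
  hence "4 * ((q1-h1)^2+(q2-h2)^2) * a^2 = (a^2 - 4*(q1*h1+q2*h2))^2" using s1 by simp
  thus ?thesis by algebra
qed

lemma eq0: "(a::real) = b \<Longrightarrow> a - b = 0" by simp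

lemma memS:
  assumes "Ec c u w = {P. dist P (f1,f2) + dist P (g1,g2) = a}" "(x,y) \<in> Ec c u w"
  shows "sqrt ((x-f1)^2+(y-f2)^2) + sqrt ((x-g1)^2+(y-g2)^2) = a"
  using assms by (auto simp: distP)

lemma LB_ns:
  fixes c u w f1 f2 g1 g2 a :: real
  assumes c: "c > 0" and w: "w \<noteq> 0"
    and S: "Ec c u w = {P. dist P (f1,f2) + dist P (g1,g2) = a}"
  shows "f1^2 - f2^2 = c^2+u^2-w^2 \<and> f1*f2 = u*w"
proof -
  note pts = Ec_pts[where c=c and u=u and w=w]
  have mS: "sqrt ((x-f1)^2+(y-f2)^2) + sqrt ((x-g1)^2+(y-g2)^2) = a" if "(x,y) \<in> Ec c u w" for x y
    using memS[OF S that] .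
  have apos: "a > 0"
  proof (rule ccontr)
    assume "\<not> a > 0"
    have A: "sqrt ((c-f1)^2+(0-f2)^2) + sqrt ((c-g1)^2+(0-g2)^2) = a" using mS[OF pts(1)] .
    have B: "sqrt ((-c-f1)^2+(0-f2)^2) + sqrt ((-c-g1)^2+(0-g2)^2) = a" using mS[OF pts(2)] .
    have "sqrt ((c-f1)^2+(0-f2)^2) = 0" using A \<open>\<not> a > 0\<close>
      by (smt (verit) real_sqrt_ge_zero sum_power2_ge_zero zero_le_power2)
    hence "c = f1" by simp
    have "sqrt ((-c-f1)^2+(0-f2)^2) = 0" using B \<open>\<not> a > 0\<close>
      by (smt (verit) real_sqrt_ge_zero zero_le_power2)
    hence "-c = f1" by simp
    thus False using \<open>c = f1\<close> c by simp
  qed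
  define m1 where "m1 = (f1+g1)/2"
  define m2 where "m2 = (f2+g2)/2"
  define h1 where "h1 = (f1-g1)/2"
  define h2 where "h2 = (f2-g2)/2"
  have E: "a^2*((x-m1)^2+(y-m2)^2 + (h1^2+h2^2)) = a^4/4 + 4*((x-m1)*h1+(y-m2)*h2)^2"
    if "(x,y) \<in> Ec c u w" for x y
  proof -
    have e1: "x - m1 - h1 = x - f1" "y - m2 - h2 = y - f2" "x - m1 + h1 = x - g1" "y - m2 + h2 = y - g2"
      by (simp_all add: m1_def m2_def h1_def h2_def field_simps)
    show ?thesis using G1[of "x-m1" h1 "y-m2" h2 a] mS[OF that] apos unfolding e1 by simp
  qed
  define M where "M = m1*h1+m2*h2"
  have Ec0: "a^2*((c-m1)^2+(0-m2)^2 + (h1^2+h2^2)) = a^4/4 + 4*((c-m1)*h1+(0-m2)*h2)^2" using E[OF pts(1)] .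
  have Ec1: "a^2*((-c-m1)^2+(0-m2)^2 + (h1^2+h2^2)) = a^4/4 + 4*((-c-m1)*h1+(0-m2)*h2)^2" using E[OF pts(2)] .
  have Eu0: "a^2*((u-m1)^2+(w-m2)^2 + (h1^2+h2^2)) = a^4/4 + 4*((u-m1)*h1+(w-m2)*h2)^2" using E[OF pts(3)] .
  have Eu1: "a^2*((-u-m1)^2+(-w-m2)^2 + (h1^2+h2^2)) = a^4/4 + 4*((-u-m1)*h1+(-w-m2)*h2)^2" using E[OF pts(4)] .
  have l1: "c * (a^2 * m1 - 4*M*h1) = 0" using Ec0[THEN eq0] Ec1[THEN eq0] unfolding M_def by algebra
  hence l1': "a^2 * m1 = 4*M*h1" using c by simp
  have l2: "w * (a^2 * m2 - 4*M*h2) = 0" using Eu0[THEN eq0] Eu1[THEN eq0] l1'[THEN eq0] unfolding M_def by algebra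
  hence l2': "a^2 * m2 = 4*M*h2" using w by simp
  have "M * (a^2 - 4*(h1^2+h2^2)) = 0" using l1'[THEN eq0] l2'[THEN eq0] unfolding M_def by algebra
  hence "M = 0 \<or> a^2 = 4*(h1^2+h2^2)" by simp
  hence m0: "m1 = 0 \<and> m2 = 0"
  proof
    assume "M = 0" thus ?thesis using l1' l2' apos by simp
  next
    assume ah: "a^2 = 4*(h1^2+h2^2)"
    have q1: "(c*h2 - 0*h1)^2 = 0" using Ec0[THEN eq0] l1'[THEN eq0] l2'[THEN eq0] ah[THEN eq0] unfolding M_def by algebra
    have q2: "(u*h2 - w*h1)^2 = 0" using Eu0[THEN eq0] l1'[THEN eq0] l2'[THEN eq0] ah[THEN eq0] unfolding M_def by algebra
    from q1 c have "h2 = 0" by simp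
    with q2 w have "h1 = 0" by simp
    with ah \<open>h2 = 0\<close> apos show ?thesis by simp
  qed
  have m01: "m1 = 0" "m2 = 0" using m0 by simp_all
  have hf: "h1 = f1" "h2 = f2" using m0 by (simp_all add: m1_def m2_def h1_def h2_def field_simps)
  have Ep: "a^2*((c * (sqrt 2 / 2) + u * (sqrt 2 / 2)-m1)^2+(w * (sqrt 2 / 2)-m2)^2 + (h1^2+h2^2))
     = a^4/4 + 4*((c * (sqrt 2 / 2) + u * (sqrt 2 / 2)-m1)*h1+(w * (sqrt 2 / 2)-m2)*h2)^2"
    by (rule E) (rule Ec_pts)
  have k2: "(sqrt 2 / 2)^2 = (1/2::real)" by (simp add: power_divide)
  define s where "s = a^2/4"
  have a2: "a^2 = 4* s" by (simp add: s_def)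
  have spos: "s > 0" using apos by (simp add: s_def)
  define T where "T = s * (s - f1^2 - f2^2)"
  define B11 where "B11 = s - f1^2"
  define B12 where "B12 = - f1*f2"
  define B22 where "B22 = s - f2^2"
  have Ec0': "a^2*(c^2 + (f1^2+f2^2)) = a^4/4 + 4*(c*f1)^2" using Ec0 unfolding m01 hf by simp
  have Eu0': "a^2*(u^2+w^2 + (f1^2+f2^2)) = a^4/4 + 4*(u*f1+w*f2)^2" using Eu0 unfolding m01 hf by simp
  have Ep': "a^2*((c * (sqrt 2 / 2) + u * (sqrt 2 / 2))^2+(w * (sqrt 2 / 2))^2 + (f1^2+f2^2))
     = a^4/4 + 4*((c * (sqrt 2 / 2) + u * (sqrt 2 / 2))*f1+(w * (sqrt 2 / 2))*f2)^2" using Ep unfolding m01 hf by simp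
  have i: "c^2 * B11 = T" using Ec0'[THEN eq0] a2[THEN eq0] unfolding T_def B11_def by algebra
  have iii: "u^2*B11 + 2*u*w*B12 + w^2*B22 = T" using Eu0'[THEN eq0] a2[THEN eq0] unfolding T_def B11_def B12_def B22_def by algebra
  have pgen: "\<And>k. k^2 - 1/2 = 0 \<Longrightarrow> a^2*((c*k+u*k)^2 + (w*k)^2 + (f1^2+f2^2)) - (a^4/4 + 4*((c*k+u*k)*f1 + w*k*f2)^2) = 0
     \<Longrightarrow> a^2 - 4 * s = 0 \<Longrightarrow> (c+u)^2*(s - f1^2) + 2*(c+u)*w*(- f1*f2) + w^2*(s - f2^2) - 2*(s * (s - f1^2 - f2^2)) = 0"
    by algebra
  have p: "(c+u)^2*B11 + 2*(c+u)*w*B12 + w^2*B22 = 2*T"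
    using pgen[OF k2[THEN eq0] Ep'[THEN eq0] a2[THEN eq0]] unfolding T_def B11_def B12_def B22_def by simp
  have "c * (u*B11 + w*B12) = 0" using i[THEN eq0] iii[THEN eq0] p[THEN eq0] by algebra
  hence ii: "u*B11 + w*B12 = 0" using c by simp
  have rk: "B11*B22 - B12^2 = T" unfolding T_def B11_def B12_def B22_def by algebra
  have j1: "c^2*w^2*B11 = T*w^2" using i[THEN eq0] by algebra
  have j2: "c^2*w^2*B12 = -u*T*w" using i[THEN eq0] ii[THEN eq0] by algebra
  have j3: "c^2*w^2*B22 = T*(c^2+u^2)" using i[THEN eq0] ii[THEN eq0] iii[THEN eq0] by algebra
  have Tnz: "T \<noteq> 0"
  proof
    assume "T = 0"
    hence "B11 = 0" "B12 = 0" "B22 = 0" using j1 j2 j3 c w by simp_all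
    hence "f1^2 = s" "f2^2 = s" "f1*f2 = 0" unfolding B11_def B12_def B22_def by simp_all
    thus False using spos by (smt (verit) mult_eq_0_iff power2_eq_square)
  qed
  have "T * (T - c^2*w^2) * (c^2*w^2) = 0" using j1[THEN eq0] j2[THEN eq0] j3[THEN eq0] rk[THEN eq0] by algebra
  hence Tv: "T = c^2*w^2" using Tnz c w by simp
  have "c^2*w^2*(B11 - w^2) = 0" using j1[THEN eq0] Tv[THEN eq0] by algebra
  hence r1: "B11 = w^2" using c w by simp
  have "c^2*w^2*(B12 + u*w) = 0" using j2[THEN eq0] Tv[THEN eq0] by algebra
  hence r2: "B12 = -u*w" using c w by simp
  have "c^2*w^2*(B22 - (c^2+u^2)) = 0" using j3[THEN eq0] Tv[THEN eq0] by algebra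
  hence r3: "B22 = c^2+u^2" using c w by simp
  show ?thesis using r1 r2 r3 unfolding B11_def B12_def B22_def by algebra
qed


lemma seg_param:
  fixes c u x :: real
  assumes c: "c > 0" and x: "\<bar>x\<bar> \<le> sqrt (c^2+u^2)"
  shows "\<exists>t. 0 \<le> t \<and> t \<le> 2*pi \<and> x = c * cos t + u * sin t"
proof -
  define R where "R = sqrt (c^2+u^2)"
  have R2: "R^2 = c^2+u^2" unfolding R_def by simp
  have Rpos: "R > 0" unfolding R_def using c by (simp add: add_pos_nonneg)
  have "x^2 \<le> R^2" using x unfolding R_def[symmetric] using Rpos
    by (metis abs_ge_zero abs_le_square_iff abs_of_pos)
  define y where "y = sqrt (R^2 - x^2)"
  have y2: "y^2 = R^2 - x^2" unfolding y_def using \<open>x^2 \<le> R^2\<close> by simp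
  define C where "C = (c*x - u*y)/R^2"
  define S where "S = (u*x + c*y)/R^2"
  have idd: "(c*x - u*y)^2 + (u*x + c*y)^2 = (c^2+u^2)*(x^2+y^2)" by algebra
  have "C^2 + S^2 = ((c*x - u*y)^2 + (u*x + c*y)^2)/(R^2)^2"
    unfolding C_def S_def by (simp only: power_divide add_divide_distrib[symmetric])
  also have "\<dots> = ((c^2+u^2)*(x^2+y^2))/(R^2)^2" using idd by simp
  also have "\<dots> = 1" using R2 y2 Rpos c by (simp add: power2_eq_square)
  finally obtain t where t: "0 \<le> t" "t \<le> 2*pi" "C = cos t" "S = sin t"
    using sincos_total_2pi_le by blast
  have idd2: "c*(c*x - u*y) + u*(u*x + c*y) = (c^2+u^2)*x" by algebra
  have "c * C + u * S = (c*(c*x - u*y) + u*(u*x + c*y))/R^2" unfolding C_def S_def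
    by (simp only: times_divide_eq_right add_divide_distrib[symmetric])
  also have "\<dots> = (c^2+u^2)*x/R^2" using idd2 by simp
  also have "\<dots> = x" using R2 Rpos c by simp
  finally show ?thesis using t by metis
qed

lemma seg_bound:
  fixes c u :: real
  assumes "(x,y) \<in> Ec c u 0"
  shows "y = 0 \<and> \<bar>x\<bar> \<le> sqrt (c^2+u^2)"
proof -
  obtain t where t: "x = c * cos t + u * sin t" "y = 0"
    using assms unfolding Ec_def by auto
  have "x^2 \<le> (c^2+u^2)*((cos t)^2 + (sin t)^2)"
  proof -
    have "(c^2+u^2)*((cos t)^2+(sin t)^2) - x^2 = (c * sin t - u * cos t)^2" unfolding t by algebra
    moreover have "0 \<le> (c * sin t - u * cos t)^2" by simp
    ultimately show ?thesis by linarith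
  qed
  hence "x^2 \<le> c^2+u^2" by simp
  hence "sqrt (x^2) \<le> sqrt (c^2+u^2)" by (rule real_sqrt_le_mono)
  thus ?thesis using t by simp
qed


lemma tri:
  fixes R f1 f2 :: real
  assumes R: "R > 0"
  shows "2 * sqrt (f1^2+f2^2) \<le> sqrt ((R-f1)^2+f2^2) + sqrt ((R+f1)^2+f2^2)"
    and "sqrt ((R-f1)^2+f2^2) + sqrt ((R+f1)^2+f2^2) = 2 * sqrt (f1^2+f2^2) \<Longrightarrow> f2 = 0 \<and> R^2 \<le> f1^2"
proof -
  define K where "K = f1^2+f2^2"
  define A where "A = (R-f1)^2+f2^2"
  define B where "B = (R+f1)^2+f2^2"
  have A0: "A \<ge> 0" "B \<ge> 0" "K \<ge> 0" unfolding A_def B_def K_def by simp_all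
  have AB: "A*B - (K-R^2)^2 = 4*R^2*f2^2" unfolding A_def B_def K_def by algebra
  have AB2: "A + B = 2*K + 2*R^2" unfolding A_def B_def K_def by algebra
  have sAB: "sqrt A * sqrt B = sqrt (A*B)" by (simp add: real_sqrt_mult)
  have "sqrt (A*B) \<ge> sqrt ((K-R^2)^2)" using AB by (intro real_sqrt_le_mono) (smt (verit) zero_le_power2 mult_nonneg_nonneg)
  hence ge: "sqrt A * sqrt B \<ge> K - R^2" using sAB by simp
  have sq: "(sqrt A + sqrt B)^2 = A + B + 2*(sqrt A * sqrt B)" using A0 by (simp add: power2_eq_square algebra_simps)
  have sK: "(2* sqrt K)^2 = 4*K" using A0 by (simp add: power_mult_distrib)
  have "(2* sqrt K)^2 \<le> (sqrt A + sqrt B)^2" using sq sK ge AB2 by linarith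
  hence "2* sqrt K \<le> sqrt A + sqrt B" by (rule power2_le_imp_le) (simp add: A0)
  thus "2 * sqrt (f1^2+f2^2) \<le> sqrt ((R-f1)^2+f2^2) + sqrt ((R+f1)^2+f2^2)" unfolding A_def B_def K_def .
  assume eq: "sqrt ((R-f1)^2+f2^2) + sqrt ((R+f1)^2+f2^2) = 2 * sqrt (f1^2+f2^2)"
  hence "(sqrt A + sqrt B)^2 = (2* sqrt K)^2" unfolding A_def B_def K_def by simp
  hence e2: "sqrt (A*B) = K - R^2" using sq sK AB2 sAB by linarith
  hence KR: "K - R^2 \<ge> 0" using A0 by (metis real_sqrt_ge_zero mult_nonneg_nonneg)
  have "A*B = (K-R^2)^2" using e2 A0 by (metis mult_nonneg_nonneg real_sqrt_pow2 zero_le_mult_iff)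
  hence "4*R^2*f2^2 = 0" using AB by simp
  hence "f2 = 0" using R by simp
  thus "f2 = 0 \<and> R^2 \<le> f1^2" using KR unfolding K_def by simp
qed

lemma LB_seg:
  fixes c u f1 f2 g1 g2 a :: real
  assumes c: "c > 0"
    and S: "Ec c u 0 = {P. dist P (f1,f2) + dist P (g1,g2) = a}"
  shows "f1^2 - f2^2 = c^2+u^2-0^2 \<and> f1*f2 = u*0"
proof -
  define R where "R = sqrt (c^2+u^2)"
  have R2: "R^2 = c^2+u^2" unfolding R_def by simp
  have Rpos: "R > 0" unfolding R_def using c by (simp add: add_pos_nonneg)
  have mem: "(x, 0) \<in> Ec c u 0" if "\<bar>x\<bar> \<le> R" for x
  proof -
    have "\<bar>x\<bar> \<le> sqrt (c^2+u^2)" using that unfolding R_def .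
    then obtain t where t: "0 \<le> t" "t \<le> 2*pi" "x = c * cos t + u * sin t"
      using seg_param[OF c] by blast
    have "(c * cos t + u * sin t, 0 * sin t) \<in> Ec c u 0" by (rule Ec_mem[OF t(1,2)])
    thus ?thesis using t(3) by simp
  qed
  have mS: "sqrt ((x-f1)^2+(y-f2)^2) + sqrt ((x-g1)^2+(y-g2)^2) = a" if "(x,y) \<in> Ec c u 0" for x y
    using memS[OF S that] .
  have O: "sqrt (f1^2+f2^2) + sqrt (g1^2+g2^2) = a" using mS[OF mem[of 0]] Rpos by simp
  have PR: "sqrt ((R-f1)^2+f2^2) + sqrt ((R-g1)^2+g2^2) = a" using mS[OF mem[of R]] Rpos by simp
  have e1: "(-R-f1)^2 = (R+f1)^2" "(-R-g1)^2 = (R+g1)^2" by algebra+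
  have MR: "sqrt ((R+f1)^2+f2^2) + sqrt ((R+g1)^2+g2^2) = a" using mS[OF mem[of "-R"]] Rpos e1 by simp
  have tF: "2 * sqrt (f1^2+f2^2) \<le> sqrt ((R-f1)^2+f2^2) + sqrt ((R+f1)^2+f2^2)" by (rule tri(1)[OF Rpos])
  have tG: "2 * sqrt (g1^2+g2^2) \<le> sqrt ((R-g1)^2+g2^2) + sqrt ((R+g1)^2+g2^2)" by (rule tri(1)[OF Rpos])
  have "sqrt ((R-f1)^2+f2^2) + sqrt ((R+f1)^2+f2^2) = 2 * sqrt (f1^2+f2^2)" using O PR MR tF tG by linarith
  from tri(2)[OF Rpos this] have F: "f2 = 0" "R^2 \<le> f1^2" by auto
  have "sqrt ((R-g1)^2+g2^2) + sqrt ((R+g1)^2+g2^2) = 2 * sqrt (g1^2+g2^2)" using O PR MR tF tG by linarith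
  from tri(2)[OF Rpos this] have G: "g2 = 0" "R^2 \<le> g1^2" by auto
  have O': "\<bar>f1\<bar> + \<bar>g1\<bar> = a" using O F G by simp
  have PR': "\<bar>R-f1\<bar> + \<bar>R-g1\<bar> = a" using PR F G by simp
  have MR': "\<bar>R+f1\<bar> + \<bar>R+g1\<bar> = a" using MR F G by simp
  have af: "R \<le> \<bar>f1\<bar>" using F(2) Rpos by (metis abs_le_square_iff abs_of_pos)
  have ag: "R \<le> \<bar>g1\<bar>" using G(2) Rpos by (metis abs_le_square_iff abs_of_pos)
  have f': "f1 \<ge> R \<or> f1 \<le> -R" using af by linarith
  have g': "g1 \<ge> R \<or> g1 \<le> -R" using ag by linarith
  have fg: "\<bar>f1 - g1\<bar> = a"
  proof -
    { assume "f1 \<ge> R" "g1 \<ge> R"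
      hence False using O' PR' Rpos by (simp add: abs_of_nonneg abs_of_nonpos) }
    moreover
    { assume "f1 \<le> -R" "g1 \<le> -R"
      hence False using O' MR' Rpos by (simp add: abs_of_nonneg abs_of_nonpos) }
    moreover
    { assume "f1 \<ge> R" "g1 \<le> -R"
      hence ?thesis using O' Rpos by (simp add: abs_of_nonneg abs_of_nonpos) }
    moreover
    { assume "f1 \<le> -R" "g1 \<ge> R"
      hence ?thesis using O' Rpos by (simp add: abs_of_nonneg abs_of_nonpos) }
    ultimately show ?thesis using f' g' by blast
  qed
  have "dist (f1, 0) (f1, f2) + dist (f1, 0) (g1, g2) = a" using fg F G by (simp add: distP)
  hence "(f1, 0) \<in> Ec c u 0" using S by blast
  hence "\<bar>f1\<bar> \<le> R" using seg_bound unfolding R_def by blast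
  hence "\<bar>f1\<bar> = R" using af by simp
  hence "f1^2 = R^2" by (metis power2_abs)
  thus ?thesis using F R2 by simp
qed


lemma LB:
  fixes c u w f1 f2 :: real and G :: "real \<times> real"
  assumes c: "c > 0" and fo: "foci_of (Ec c u w) (f1,f2) G"
  shows "f1^2 - f2^2 = c^2+u^2-w^2 \<and> f1*f2 = u*w"
proof -
  obtain a where S: "Ec c u w = {P. dist P (f1,f2) + dist P G = a}" using fo unfolding foci_of_def by blast
  obtain g1 g2 where G: "G = (g1,g2)" by (cases G)
  show ?thesis
  proof (cases "w = 0")
    case True
    thus ?thesis using LB_seg[OF c] S G by simp
  next
    case False
    show ?thesis using LB_ns[OF c False] S G by simp
  qed
qed

lemma tri2:
  fixes R x y :: real
  assumes R: "R > 0" and eq: "sqrt ((x-R)^2+y^2) + sqrt ((x+R)^2+y^2) = 2*R"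
  shows "y = 0 \<and> \<bar>x\<bar> \<le> R"
proof -
  have a1: "sqrt ((x-R)^2+y^2) \<ge> \<bar>x-R\<bar>" by (metis real_sqrt_abs real_sqrt_le_mono le_add_same_cancel1 zero_le_power2)
  have a2: "sqrt ((x+R)^2+y^2) \<ge> \<bar>x+R\<bar>" by (metis real_sqrt_abs real_sqrt_le_mono le_add_same_cancel1 zero_le_power2)
  have y: "y = 0"
  proof (rule ccontr)
    assume "y \<noteq> 0"
    hence "(x-R)^2 < (x-R)^2+y^2" by simp
    hence "sqrt ((x-R)^2) < sqrt ((x-R)^2+y^2)" by (rule real_sqrt_less_mono)
    hence "\<bar>x-R\<bar> < sqrt ((x-R)^2+y^2)" by simp
    thus False using a2 eq by linarith
  qed
  hence "\<bar>x-R\<bar> + \<bar>x+R\<bar> = 2*R" using eq by simp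
  hence "\<bar>x\<bar> \<le> R" by linarith
  thus ?thesis using y by simp
qed

lemma LA_seg:
  fixes c u f1 f2 :: real
  assumes c: "c > 0" and r: "f1^2 - f2^2 = c^2+u^2-0^2" "f1*f2 = u*0"
  shows "foci_of (Ec c u 0) (f1,f2) (-f1,-f2)"
proof -
  define R where "R = sqrt (c^2+u^2)"
  have R2: "R^2 = c^2+u^2" unfolding R_def by simp
  have Rpos: "R > 0" unfolding R_def using c by (simp add: add_pos_nonneg)
  have f2: "f2 = 0"
  proof (rule ccontr)
    assume "f2 \<noteq> 0"
    hence "f1 = 0" using r(2) by simp
    hence "0 - f2^2 = c^2+u^2" using r(1) by simp
    moreover have "c^2+u^2 > 0" using c by (simp add: add_pos_nonneg)
    ultimately show False by (smt (verit) zero_le_power2)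
  qed
  have "f1^2 = R^2" using r(1) f2 R2 by simp
  hence af: "\<bar>f1\<bar> = R" using Rpos by (metis abs_of_pos power2_eq_iff_nonneg abs_ge_zero less_imp_le power2_abs)
  have key: "sqrt ((x-f1)^2+(y-f2)^2) + sqrt ((x- -f1)^2+(y- -f2)^2) = sqrt ((x-R)^2+y^2) + sqrt ((x+R)^2+y^2)" for x y
  proof (cases "f1 \<ge> 0")
    case True then show ?thesis using af f2 by simp
  next
    case False then have "f1 = -R" using af by simp
    thus ?thesis using f2 by simp
  qed
  have "Ec c u 0 = {P. dist P (f1,f2) + dist P (-f1,-f2) = 2*R}"
  proof (intro set_eqI iffI)
    fix P assume P: "P \<in> Ec c u 0"
    obtain x y where xy: "P = (x,y)" by (cases P)
    have "y = 0 \<and> \<bar>x\<bar> \<le> R" using seg_bound P xy unfolding R_def by blast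
    hence "sqrt ((x-R)^2+y^2) + sqrt ((x+R)^2+y^2) = 2*R" by (simp; linarith)
    thus "P \<in> {P. dist P (f1,f2) + dist P (-f1,-f2) = 2*R}" using key[of x y] xy by (simp add: distP)
  next
    fix P assume P: "P \<in> {P. dist P (f1,f2) + dist P (-f1,-f2) = 2*R}"
    obtain x y where xy: "P = (x,y)" by (cases P)
    have "sqrt ((x-R)^2+y^2) + sqrt ((x+R)^2+y^2) = 2*R" using P key[of x y] xy by (simp add: distP)
    from tri2[OF Rpos this] have "y = 0" "\<bar>x\<bar> \<le> R" by auto
    obtain t where t: "0 \<le> t" "t \<le> 2*pi" "x = c * cos t + u * sin t"
      using seg_param[OF c] \<open>\<bar>x\<bar> \<le> R\<close> unfolding R_def by blast
    have "(c * cos t + u * sin t, 0 * sin t) \<in> Ec c u 0" by (rule Ec_mem[OF t(1,2)])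
    thus "P \<in> Ec c u 0" using t(3) xy \<open>y = 0\<close> by simp
  qed
  thus ?thesis unfolding foci_of_def by blast
qed


lemma G2:
  fixes s f1 f2 x y :: real
  assumes s: "s > 0" and K: "s - f1^2 - f2^2 > 0"
    and C: "s*(x^2+y^2) - (x*f1+y*f2)^2 = s*(s - f1^2 - f2^2)"
  shows "sqrt ((x-f1)^2+(y-f2)^2) + sqrt ((x+f1)^2+(y+f2)^2) = 2 * sqrt s"
proof -
  define p where "p = x*f1+y*f2"
  have cs: "p^2 \<le> (x^2+y^2)*(f1^2+f2^2)"
  proof -
    have "(x^2+y^2)*(f1^2+f2^2) - p^2 = (x*f2 - y*f1)^2" unfolding p_def by algebra
    thus ?thesis by (smt (verit) zero_le_power2)
  qed
  have P2: "s*(x^2+y^2) = p^2 + s*(s - f1^2 - f2^2)" using C unfolding p_def by simp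
  have "s * p^2 \<le> s*(x^2+y^2)*(f1^2+f2^2)" using cs s by (simp add: mult.assoc)
  hence "s * p^2 \<le> (p^2 + s*(s - f1^2 - f2^2))*(f1^2+f2^2)" using P2 by simp
  hence "p^2 * (s - f1^2 - f2^2) \<le> s*(s - f1^2 - f2^2)*(f1^2+f2^2)" by (simp add: algebra_simps)
  hence "p^2 \<le> s*(f1^2+f2^2)" using K by (simp add: mult.commute mult.left_commute)
  also have "\<dots> < s* s" using K s by simp
  finally have "p^2 < s^2" by (simp add: power2_eq_square)
  hence pb: "\<bar>p\<bar> < s" using s by (metis abs_of_pos power2_abs power_less_imp_less_base less_imp_le)
  have d1: "(x-f1)^2+(y-f2)^2 = (s-p)^2/s"
  proof -
    have "s*((x-f1)^2+(y-f2)^2) = (s-p)^2" using P2 unfolding p_def by algebra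
    thus ?thesis using s by (simp add: field_simps)
  qed
  have d2: "(x+f1)^2+(y+f2)^2 = (s+p)^2/s"
  proof -
    have "s*((x+f1)^2+(y+f2)^2) = (s+p)^2" using P2 unfolding p_def by algebra
    thus ?thesis using s by (simp add: field_simps)
  qed
  have "sqrt ((x-f1)^2+(y-f2)^2) = (s-p)/sqrt s" unfolding d1 using pb s by (simp add: real_sqrt_divide)
  moreover have "sqrt ((x+f1)^2+(y+f2)^2) = (s+p)/sqrt s" unfolding d2 using pb s by (simp add: real_sqrt_divide)
  ultimately have "sqrt ((x-f1)^2+(y-f2)^2) + sqrt ((x+f1)^2+(y+f2)^2) = 2* s/sqrt s" by (simp add: add_divide_distrib[symmetric])
  also have "\<dots> = 2 * sqrt s" using s real_div_sqrt[of s] by (simp add: times_divide_eq_right[symmetric])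
  finally show ?thesis .
qed


lemma LA_ns:
  fixes c u w f1 f2 :: real
  assumes c: "c > 0" and w: "w \<noteq> 0" and r: "f1^2 - f2^2 = c^2+u^2-w^2" "f1*f2 = u*w"
  shows "foci_of (Ec c u w) (f1,f2) (-f1,-f2)"
proof -
  define s where "s = f1^2 + w^2"
  have spos: "s > 0" unfolding s_def using w by (simp add: add_nonneg_pos)
  have sK: "s * (s - f1^2 - f2^2) = c^2*w^2" using r(1)[THEN eq0] r(2)[THEN eq0] unfolding s_def by algebra
  have Kpos: "s - f1^2 - f2^2 > 0"
  proof -
    have "s * (s - f1^2 - f2^2) > 0" using sK c w by simp
    thus ?thesis using spos by (simp add: zero_less_mult_iff)
  qed
  have I: "s*(x^2+y^2) - (x*f1+y*f2)^2 - s*(s - f1^2 - f2^2) = (w*x - u*y)^2 + c^2*y^2 - c^2*w^2" for x y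
    using r(1)[THEN eq0] r(2)[THEN eq0] sK[THEN eq0] unfolding s_def by algebra
  have s2: "(2 * sqrt s)^2 = 4 * s" using spos by (simp add: power_mult_distrib)
  have "Ec c u w = {P. dist P (f1,f2) + dist P (-f1,-f2) = 2 * sqrt s}"
  proof (intro set_eqI iffI)
    fix P assume "P \<in> Ec c u w"
    then obtain t where P: "P = (c * cos t + u * sin t, w * sin t)" unfolding Ec_def by blast
    define x where "x = c * cos t + u * sin t"
    define y where "y = w * sin t"
    have "(w*x - u*y)^2 + c^2*y^2 - c^2*w^2 = c^2*w^2*((cos t)^2 + (sin t)^2 - 1)"
      unfolding x_def y_def by algebra
    hence "s*(x^2+y^2) - (x*f1+y*f2)^2 = s*(s - f1^2 - f2^2)" using I[of x y] by simp
    from G2[OF spos Kpos this]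
    show "P \<in> {P. dist P (f1,f2) + dist P (-f1,-f2) = 2 * sqrt s}" using P x_def y_def by (simp add: distP)
  next
    fix P assume P: "P \<in> {P. dist P (f1,f2) + dist P (-f1,-f2) = 2 * sqrt s}"
    obtain x y where xy: "P = (x,y)" by (cases P)
    have sm: "sqrt ((x-f1)^2+(y-f2)^2) + sqrt ((x+f1)^2+(y+f2)^2) = 2 * sqrt s" using P xy by (simp add: distP)
    have "(2 * sqrt s)^2 * ((x^2+y^2) + (f1^2+f2^2)) = (2 * sqrt s)^4/4 + 4*(x*f1+y*f2)^2"
      by (rule G1[OF sm]) (simp add: spos)
    moreover have "(2 * sqrt s)^4 = (4 * s)^2"
    proof -
      have "(2 * sqrt s)^4 = ((2 * sqrt s)^2)^2" by (simp flip: power_mult)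
      thus ?thesis using s2 by (simp only:)
    qed
    ultimately have "4 * s * ((x^2+y^2) + (f1^2+f2^2)) = (4 * s)^2/4 + 4*(x*f1+y*f2)^2" using s2 by simp
    hence "s*(x^2+y^2) - (x*f1+y*f2)^2 - s*(s - f1^2 - f2^2) = 0" by (simp add: algebra_simps power2_eq_square)
    hence E: "(w*x - u*y)^2 + c^2*y^2 = c^2*w^2" using I[of x y] by simp
    define Cc where "Cc = (w*x - u*y)/(c*w)"
    define Ss where "Ss = y/w"
    have "Cc^2 + Ss^2 = ((w*x - u*y)^2 + c^2*y^2)/(c^2*w^2)" unfolding Cc_def Ss_def using c w
      by (simp add: power_divide power_mult_distrib field_simps)
    also have "\<dots> = 1" using E c w by simp
    finally obtain t where t: "0 \<le> t" "t \<le> 2*pi" "Cc = cos t" "Ss = sin t"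
      using sincos_total_2pi_le by blast
    have "x = c * Cc + u * Ss" unfolding Cc_def Ss_def using c w by (simp add: field_simps)
    moreover have "y = w * Ss" unfolding Ss_def using w by simp
    moreover have "(c * cos t + u * sin t, w * sin t) \<in> Ec c u w" by (rule Ec_mem[OF t(1,2)])
    ultimately show "P \<in> Ec c u w" using t(3,4) xy by simp
  qed
  thus ?thesis unfolding foci_of_def by blast
qed

lemma LA:
  fixes c u w f1 f2 :: real
  assumes c: "c > 0" and r: "f1^2 - f2^2 = c^2+u^2-w^2" "f1*f2 = u*w"
  shows "foci_of (Ec c u w) (f1,f2) (-f1,-f2)"
proof (cases "w = 0")
  case True thus ?thesis using LA_seg[OF c] r by simp
next
  case False show ?thesis using LA_ns[OF c False r] .
qed

definition relF :: "real \<Rightarrow> real \<Rightarrow> real \<Rightarrow> real \<Rightarrow> real \<Rightarrow> bool" where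
  "relF x0 v0 \<alpha> x y \<longleftrightarrow> x^2 - y^2 = x0^2 + (v0 * cos \<alpha>)^2 - (v0 * sin \<alpha>)^2 \<and> x * y = (v0 * cos \<alpha>) * (v0 * sin \<alpha>)"

lemma locus_rel:
  assumes "x0 > 0"
  shows "focus_locus x0 v0 = {(x,y). \<exists>\<alpha>. -pi \<le> \<alpha> \<and> \<alpha> \<le> pi \<and> relF x0 v0 \<alpha> x y}"
proof (intro set_eqI iffI)
  fix F assume "F \<in> focus_locus x0 v0"
  then obtain \<alpha> F' where a: "-pi \<le> \<alpha>" "\<alpha> \<le> pi" "foci_of (E_curve x0 v0 \<alpha>) F F'"
    unfolding focus_locus_def by blast
  obtain x y where F: "F = (x,y)" by (cases F)
  have "relF x0 v0 \<alpha> x y" using LB[OF assms] a(3) F unfolding E_Ec relF_def by blast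
  thus "F \<in> {(x,y). \<exists>\<alpha>. -pi \<le> \<alpha> \<and> \<alpha> \<le> pi \<and> relF x0 v0 \<alpha> x y}" using a F by blast
next
  fix F assume "F \<in> {(x,y). \<exists>\<alpha>. -pi \<le> \<alpha> \<and> \<alpha> \<le> pi \<and> relF x0 v0 \<alpha> x y}"
  then obtain x y \<alpha> where F: "F = (x,y)" "-pi \<le> \<alpha>" "\<alpha> \<le> pi" "relF x0 v0 \<alpha> x y" by blast
  have "foci_of (E_curve x0 v0 \<alpha>) (x,y) (-x,-y)"
    unfolding E_Ec using LA[OF assms] F(4) unfolding relF_def by blast
  thus "F \<in> focus_locus x0 v0" unfolding focus_locus_def using F by blast
qed

lemma cass_id: "((x+x0)^2+y^2)*((x-x0)^2+y^2) = (x^2-y^2-x0^2)^2 + (2*x*y)^2"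
  for x y x0 :: real by algebra

lemma rel_cass:
  fixes x0 v0 :: real
  assumes v: "v0 > 0"
  shows "(\<exists>\<alpha>. -pi \<le> \<alpha> \<and> \<alpha> \<le> pi \<and> relF x0 v0 \<alpha> x y) \<longleftrightarrow> ((x+x0)^2+y^2)*((x-x0)^2+y^2) = v0^4"
proof
  assume "\<exists>\<alpha>. -pi \<le> \<alpha> \<and> \<alpha> \<le> pi \<and> relF x0 v0 \<alpha> x y"
  then obtain \<alpha> where r: "x^2 - y^2 = x0^2 + (v0 * cos \<alpha>)^2 - (v0 * sin \<alpha>)^2" "x * y = (v0 * cos \<alpha>) * (v0 * sin \<alpha>)"
    unfolding relF_def by blast
  have sc: "(sin \<alpha>)^2 + (cos \<alpha>)^2 = 1" by simp
  have "(x^2-y^2-x0^2)^2 + (2*x*y)^2 - v0^4 = 0"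
    using r(1)[THEN eq0] r(2)[THEN eq0] sc[THEN eq0] by algebra
  thus "((x+x0)^2+y^2)*((x-x0)^2+y^2) = v0^4" unfolding cass_id by simp
next
  assume h: "((x+x0)^2+y^2)*((x-x0)^2+y^2) = v0^4"
  define X where "X = (x^2-y^2-x0^2)/v0^2"
  define Y where "Y = 2*x*y/v0^2"
  have "X^2 + Y^2 = ((x^2-y^2-x0^2)^2 + (2*x*y)^2)/(v0^2)^2" unfolding X_def Y_def
    by (simp only: power_divide add_divide_distrib[symmetric])
  also have "\<dots> = 1" using h v unfolding cass_id by (simp flip: power_mult)
  finally obtain t where t: "0 \<le> t" "t \<le> 2*pi" "X = cos t" "Y = sin t"
    using sincos_total_2pi_le by blast
  define \<alpha> where "\<alpha> = t/2"
  have ct: "cos t = (cos \<alpha>)^2 - (sin \<alpha>)^2" unfolding \<alpha>_def using cos_double[of "t/2"] by simp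
  have st: "sin t = 2 * sin \<alpha> * cos \<alpha>" unfolding \<alpha>_def using sin_double[of "t/2"] by simp
  have e1: "x^2-y^2-x0^2 = v0^2 * X" unfolding X_def using v by simp
  have e2: "2*x*y = v0^2 * Y" unfolding Y_def using v by simp
  have "relF x0 v0 \<alpha> x y" unfolding relF_def
  proof
    show "x^2 - y^2 = x0^2 + (v0 * cos \<alpha>)^2 - (v0 * sin \<alpha>)^2"
      using e1 t(3) ct by (simp add: power_mult_distrib algebra_simps)
    show "x * y = (v0 * cos \<alpha>) * (v0 * sin \<alpha>)"
      using e2 t(4) st by (simp add: power2_eq_square algebra_simps)
  qed
  moreover have "-pi \<le> \<alpha>" "\<alpha> \<le> pi" unfolding \<alpha>_def using t(1,2) pi_ge_zero by linarith+
  ultimately show "\<exists>\<alpha>. -pi \<le> \<alpha> \<and> \<alpha> \<le> pi \<and> relF x0 v0 \<alpha> x y" by blast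
qed

lemma safety:
  fixes x0 v0 x y a :: real
  assumes x0: "x0 > 0" and v: "v0 > 0" and r: "relF x0 v0 a x y"
  shows "x^2 / (x0^2 + v0^2) + y^2 / v0^2 \<le> 1"
proof -
  define u where "u = v0 * cos a"
  define w where "w = v0 * sin a"
  have uw: "u^2 + w^2 = v0^2" unfolding u_def w_def by (simp add: power_mult_distrib algebra_simps flip: distrib_left)
  define X where "X = x0^2"
  define V where "V = v0^2"
  define W where "W = w^2"
  define U where "U = u^2"
  define p where "p = x^2"
  define q where "q = y^2"
  define D where "D = X + V - 2*W"
  have UV: "U = V - W" using uw unfolding U_def V_def W_def by simp
  have pq: "p = D + q" using r UV unfolding relF_def u_def[symmetric] w_def[symmetric] p_def q_def D_def X_def U_def W_def by simp
  have pq2: "p * q = U * W" using r unfolding relF_def u_def[symmetric] w_def[symmetric] p_def q_def U_def W_def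
    by (metis power_mult_distrib)
  have Xp: "X > 0" "V > 0" "W \<ge> 0" "p \<ge> 0" "q \<ge> 0" using x0 v unfolding X_def V_def W_def p_def q_def by simp_all
  define Z where "Z = q * (X + 2*V)"
  have phi: "Z^2 + D*(X+2*V)*Z - U*W*(X+2*V)^2 = 0"
    using pq[THEN eq0] pq2[THEN eq0] unfolding Z_def by algebra
  have phi0: "(2*V*W)^2 + D*(X+2*V)*(2*V*W) - U*W*(X+2*V)^2 = W*(V*X*(X+2*V) + W*X^2)"
    using UV[THEN eq0] unfolding D_def by algebra
  have fac: "(Z - 2*V*W)*(Z + 2*V*W + D*(X+2*V)) = - (W*(V*X*(X+2*V) + W*X^2))"
    using phi[THEN eq0] phi0[THEN eq0] by algebra
  have nn: "W*(V*X*(X+2*V) + W*X^2) \<ge> 0" using Xp by simp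
  have s2: "Z + D*(X+2*V) = (X+2*V)*p" using pq[THEN eq0] unfolding Z_def by algebra
  have Zb: "Z \<le> 2*V*W"
  proof (rule ccontr)
    assume "\<not> Z \<le> 2*V*W"
    hence g: "Z - 2*V*W > 0" by simp
    have "(X+2*V)*p \<ge> 0" using Xp by simp
    moreover have "2*V*W \<ge> 0" using Xp by simp
    ultimately have h2: "Z + 2*V*W + D*(X+2*V) \<ge> 0" using s2 by linarith
    have "(Z - 2*V*W)*(Z + 2*V*W + D*(X+2*V)) \<le> 0" using fac nn by simp
    hence "Z + 2*V*W + D*(X+2*V) = 0" using g h2 by (smt (verit) mult_pos_pos)
    hence "(X+2*V)*p + 2*V*W = 0" using s2 by simp
    hence "p = 0" "W = 0" using Xp by (smt (verit) mult_nonneg_nonneg mult_pos_pos zero_less_mult_iff)+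
    hence "q = - X - V" using pq unfolding D_def by simp
    thus False using Xp by simp
  qed
  have "p * V + q * (X + V) = D*V + Z" using pq unfolding Z_def by (simp add: algebra_simps)
  also have "\<dots> \<le> D*V + 2*V*W" using Zb by simp
  also have "\<dots> = V * (X + V)" unfolding D_def by (simp add: algebra_simps)
  finally have "p * V + q * (X + V) \<le> V * (X + V)" .
  moreover have "p / (X + V) + q / V = (p * V + q * (X + V)) / (V * (X + V))" using Xp by (simp add: field_simps)
  moreover have "V * (X + V) > 0" using Xp by simp
  ultimately have "p / (X + V) + q / V \<le> 1" by (simp add: pos_divide_le_eq)
  thus ?thesis unfolding p_def q_def X_def V_def .
qed

lemma quart_id: "((x+x0)^2+y^2)*((x-x0)^2+y^2) = (x^2+y^2)^2 - 2*x0^2*(x^2-y^2) + x0^4"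
  for x y x0 :: real by algebra

lemma polar_id: "(r * cos t)^2 + (r * sin t)^2 = r^2" "(r * cos t)^2 - (r * sin t)^2 = r^2 * cos (2*t)"
  for r t :: real
proof -
  have sc: "(sin t)^2 + (cos t)^2 = 1" by simp
  show "(r * cos t)^2 + (r * sin t)^2 = r^2" using sc by (simp add: power_mult_distrib flip: distrib_left)
  show "(r * cos t)^2 - (r * sin t)^2 = r^2 * cos (2*t)" unfolding cos_double by (simp add: power_mult_distrib right_diff_distrib)
qed

lemma polar_exists: "\<exists>r t. r \<ge> 0 \<and> x = r * cos t \<and> y = r * sin t" for x y :: real
proof (cases "x = 0 \<and> y = 0")
  case True thus ?thesis by (intro exI[of _ 0]) simp
next
  case False
  define r where "r = sqrt (x^2+y^2)"
  have r2: "r^2 = x^2+y^2" unfolding r_def by simp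
  have rpos: "r > 0" unfolding r_def using False by (simp add: sum_power2_gt_zero_iff)
  have "(x/r)^2 + (y/r)^2 = 1" using r2 rpos False by (simp add: power_divide add_divide_distrib[symmetric])
  then obtain t where "x/r = cos t" "y/r = sin t" using sincos_total_2pi_le by blast
  hence "x = r * cos t" "y = r * sin t" using rpos by (simp_all add: field_simps)
  thus ?thesis using rpos by (intro exI[of _ r] exI[of _ t]) simp
qed

lemma polar_set:
  "{(r * cos \<theta>, r * sin \<theta>) | r \<theta>. r \<ge> 0 \<and> r^4 - 2 * x0^2 * r^2 * cos (2 * \<theta>) = v0^4 - x0^4}
   = {(x, y). (x^2 + y^2)^2 - 2 * x0^2 * (x^2 - y^2) = v0^4 - x0^4}" (is "?A = ?B")
  for x0 v0 :: real
proof (intro set_eqI iffI)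
  fix P assume "P \<in> ?A"
  then obtain r t where P: "P = (r * cos t, r * sin t)" "r^4 - 2 * x0^2 * r^2 * cos (2 * t) = v0^4 - x0^4" by blast
  have "r^4 = (r^2)^2" by (simp flip: power_mult)
  thus "P \<in> ?B" using P polar_id[of r t] by (simp add: mult.assoc)
next
  fix P assume "P \<in> ?B"
  then obtain x y where P: "P = (x,y)" "(x^2 + y^2)^2 - 2 * x0^2 * (x^2 - y^2) = v0^4 - x0^4" by blast
  obtain r t where rt: "r \<ge> 0" "x = r * cos t" "y = r * sin t" using polar_exists by blast
  have "r^4 = (r^2)^2" by (simp flip: power_mult)
  hence "r^4 - 2 * x0^2 * r^2 * cos (2 * t) = v0^4 - x0^4" using P(2) polar_id[of r t] rt by (simp add: mult.assoc)
  thus "P \<in> ?A" using P rt by blast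
qed

lemma lemn_set:
  fixes x0 :: real
  assumes x0: "x0 > 0"
  shows "{(x, y). (x^2 + y^2)^2 = 2 * x0^2 * (x^2 - y^2)} =
    {(r * cos \<theta>, r * sin \<theta>) | r \<theta>. -(pi/4) \<le> \<theta> \<and> \<theta> \<le> pi/4 \<and> r^2 = 2 * x0^2 * cos (2 * \<theta>)}"
    (is "?A = ?B")
proof (intro set_eqI iffI)
  fix P assume "P \<in> ?B"
  then obtain r t where P: "P = (r * cos t, r * sin t)" "r^2 = 2 * x0^2 * cos (2 * t)" by blast
  have "(r^2)^2 = 2 * x0^2 * (r^2 * cos (2*t))" using P(2) by (simp add: power2_eq_square)
  thus "P \<in> ?A" using P polar_id[of r t] by simp
next
  fix P assume "P \<in> ?A"
  then obtain x y where P: "P = (x,y)" and e: "(x^2 + y^2)^2 = 2 * x0^2 * (x^2 - y^2)" by blast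
  show "P \<in> ?B"
  proof (cases "x = 0")
    case True
    hence "(y^2)^2 + 2 * x0^2 * y^2 = 0" using e by simp
    moreover have "2*x0^2*y^2 \<ge> 0" "(y^2)^2 \<ge> 0" by simp_all
    ultimately have "2*x0^2*y^2 = 0" by linarith
    hence "y = 0" using x0 by simp
    have "cos (2 * (pi/4)) = 0" by simp
    hence "(0::real) = 0 * cos (pi/4) \<and> (0::real) = 0 * sin (pi/4) \<and> -(pi/4) \<le> pi/4 \<and> pi/4 \<le> pi/4 \<and> (0::real)^2 = 2 * x0^2 * cos (2 * (pi/4))"
      using pi_ge_zero by simp
    thus ?thesis using P True \<open>y = 0\<close> by blast
  next
    case False
    define z where "z = y/x"
    have yz: "y = x * z" unfolding z_def using False by simp
    have xx: "x^2 > 0" using False by simp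
    have "x^2+y^2 > 0" using xx by (simp add: add_pos_nonneg)
    hence "(x^2+y^2)^2 > 0" by (rule zero_less_power)
    hence "2 * x0^2 * (x^2 - y^2) > 0" using e by simp
    hence "x^2 - y^2 > 0" using x0 by (simp add: zero_less_mult_iff)
    hence "x^2 * (1 - z^2) > 0" unfolding yz by (simp add: power_mult_distrib algebra_simps)
    hence z1: "z^2 < 1" using xx by (simp add: zero_less_mult_iff)
    hence "\<bar>z\<bar> < 1" by (simp add: abs_square_less_1)
    hence zb: "-1 < z" "z < 1" by linarith+
    define t where "t = arctan z"
    have tb: "-(pi/4) \<le> t" "t \<le> pi/4" unfolding t_def
      using zb arctan_less_iff[of "-1" z] arctan_less_iff[of z 1] arctan_one arctan_minus[of 1] by simp_all
    define r where "r = x * sqrt (1 + z^2)"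
    have sq: "sqrt (1 + z^2) > 0" by (simp add: add_pos_nonneg)
    have c1: "cos t = 1 / sqrt (1 + z^2)" "sin t = z / sqrt (1 + z^2)" unfolding t_def by (simp_all add: cos_arctan sin_arctan)
    have px: "x = r * cos t" unfolding r_def c1 using sq by simp
    have py: "y = r * sin t" unfolding r_def c1 yz using sq by simp
    have r2: "r^2 = x^2 + y^2" unfolding r_def yz by (simp add: power_mult_distrib algebra_simps add_pos_nonneg)
    have c2: "r^2 * cos (2*t) = x^2 - y^2" using polar_id(2)[of r t] px py by simp
    have "r^2 * r^2 = (x^2+y^2)^2" using r2 by (simp add: power2_eq_square)
    also have "\<dots> = 2 * x0^2 * (r^2 * cos (2*t))" using e c2 by simp
    also have "\<dots> = r^2 * (2 * x0^2 * cos (2 * t))" by (simp add: algebra_simps)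
    finally have "r^2 * r^2 = r^2 * (2 * x0^2 * cos (2 * t))" .
    moreover have "r^2 \<noteq> 0" using r2 xx by simp
    ultimately have "r^2 = 2 * x0^2 * cos (2 * t)" by (metis mult_left_cancel)
    thus ?thesis using P px py tb by blast
  qed
qed

lemma alpha_set:
  "{(r * cos \<theta>, r * sin \<theta>) | r \<theta>. -(pi/4) \<le> \<theta> \<and> \<theta> \<le> pi/4 \<and> r^2 = 2 * x0^2 * cos (2 * \<theta>)}
   = {(r * cos (\<alpha>/2), r * sin (\<alpha>/2)) | r \<alpha>. -(pi/2) \<le> \<alpha> \<and> \<alpha> \<le> pi/2 \<and> r^2 = 2 * x0^2 * cos \<alpha>}"
  (is "?A = ?B") for x0 :: real
proof (intro set_eqI iffI)
  fix P assume "P \<in> ?A"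
  then obtain r t where P: "P = (r * cos t, r * sin t)" "-(pi/4) \<le> t" "t \<le> pi/4" "r^2 = 2 * x0^2 * cos (2 * t)" by blast
  show "P \<in> ?B" using P by (intro CollectI exI[of _ r] exI[of _ "2*t"]) simp
next
  fix P assume "P \<in> ?B"
  then obtain r a where P: "P = (r * cos (a/2), r * sin (a/2))" "-(pi/2) \<le> a" "a \<le> pi/2" "r^2 = 2 * x0^2 * cos a" by blast
  show "P \<in> ?A" using P by (intro CollectI exI[of _ r] exI[of _ "a/2"]) simp
qed

theorem mainTheorem1:
  fixes x0 v0 :: real
  assumes "x0 > 0" and "v0 > 0"
  shows
    "focus_locus x0 v0 = {(x, y). ((x + x0)^2 + y^2) * ((x - x0)^2 + y^2) = v0^4}
   \<and> focus_locus x0 v0 = {(x, y). (x^2 + y^2)^2 - 2 * x0^2 * (x^2 - y^2) = v0^4 - x0^4}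
   \<and> focus_locus x0 v0 = {(r * cos \<theta>, r * sin \<theta>) | r \<theta>.
         r \<ge> 0 \<and> r^4 - 2 * x0^2 * r^2 * cos (2 * \<theta>) = v0^4 - x0^4}
   \<and> (\<forall>x y. (x, y) \<in> focus_locus x0 v0 \<longrightarrow>
         (-x, y) \<in> focus_locus x0 v0 \<and> (x, -y) \<in> focus_locus x0 v0)
   \<and> (\<forall>x y. (x, y) \<in> focus_locus x0 v0 \<longrightarrow> x^2 / (x0^2 + v0^2) + y^2 / v0^2 \<le> 1)
   \<and> (x0 = v0 \<longrightarrow>
        focus_locus x0 v0 = {(x, y). (x^2 + y^2)^2 = 2 * x0^2 * (x^2 - y^2)}
      \<and> focus_locus x0 v0 = {(r * cos \<theta>, r * sin \<theta>) | r \<theta>.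
           -(pi/4) \<le> \<theta> \<and> \<theta> \<le> pi/4 \<and> r^2 = 2 * x0^2 * cos (2 * \<theta>)}
      \<and> (\<forall>\<alpha>. -(pi/2) \<le> \<alpha> \<and> \<alpha> \<le> pi/2 \<longrightarrow>
           (\<exists>F'. foci_of (E_curve x0 v0 \<alpha>)
                   (sqrt (2 * x0^2 * cos \<alpha>) * cos (\<alpha>/2), sqrt (2 * x0^2 * cos \<alpha>) * sin (\<alpha>/2)) F'))
      \<and> focus_locus x0 v0 = {(r * cos (\<alpha>/2), r * sin (\<alpha>/2)) | r \<alpha>.
           -(pi/2) \<le> \<alpha> \<and> \<alpha> \<le> pi/2 \<and> r^2 = 2 * x0^2 * cos \<alpha>})"
proof -
  have x0: "x0 > 0" and v: "v0 > 0" using assms by auto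
  have L1: "focus_locus x0 v0 = {(x, y). ((x + x0)^2 + y^2) * ((x - x0)^2 + y^2) = v0^4}"
    unfolding locus_rel[OF x0] using rel_cass[OF v] by auto
  have L2: "focus_locus x0 v0 = {(x, y). (x^2 + y^2)^2 - 2 * x0^2 * (x^2 - y^2) = v0^4 - x0^4}"
    unfolding L1 quart_id by auto
  have L3: "focus_locus x0 v0 = {(r * cos \<theta>, r * sin \<theta>) | r \<theta>.
         r \<ge> 0 \<and> r^4 - 2 * x0^2 * r^2 * cos (2 * \<theta>) = v0^4 - x0^4}"
    unfolding L2 polar_set ..
  have L4: "\<forall>x y. (x, y) \<in> focus_locus x0 v0 \<longrightarrow>
         (-x, y) \<in> focus_locus x0 v0 \<and> (x, -y) \<in> focus_locus x0 v0"
    unfolding L2 by simp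
  have L5: "\<forall>x y. (x, y) \<in> focus_locus x0 v0 \<longrightarrow> x^2 / (x0^2 + v0^2) + y^2 / v0^2 \<le> 1"
  proof (intro allI impI)
    fix x y assume "(x, y) \<in> focus_locus x0 v0"
    then obtain a where "relF x0 v0 a x y" unfolding locus_rel[OF x0] by blast
    thus "x^2 / (x0^2 + v0^2) + y^2 / v0^2 \<le> 1" by (rule safety[OF x0 v])
  qed
  have L6: "x0 = v0 \<longrightarrow>
        focus_locus x0 v0 = {(x, y). (x^2 + y^2)^2 = 2 * x0^2 * (x^2 - y^2)}
      \<and> focus_locus x0 v0 = {(r * cos \<theta>, r * sin \<theta>) | r \<theta>.
           -(pi/4) \<le> \<theta> \<and> \<theta> \<le> pi/4 \<and> r^2 = 2 * x0^2 * cos (2 * \<theta>)}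
      \<and> (\<forall>\<alpha>. -(pi/2) \<le> \<alpha> \<and> \<alpha> \<le> pi/2 \<longrightarrow>
           (\<exists>F'. foci_of (E_curve x0 v0 \<alpha>)
                   (sqrt (2 * x0^2 * cos \<alpha>) * cos (\<alpha>/2), sqrt (2 * x0^2 * cos \<alpha>) * sin (\<alpha>/2)) F'))
      \<and> focus_locus x0 v0 = {(r * cos (\<alpha>/2), r * sin (\<alpha>/2)) | r \<alpha>.
           -(pi/2) \<le> \<alpha> \<and> \<alpha> \<le> pi/2 \<and> r^2 = 2 * x0^2 * cos \<alpha>}"
  proof
    assume eqv: "x0 = v0"
    have M1: "focus_locus x0 v0 = {(x, y). (x^2 + y^2)^2 = 2 * x0^2 * (x^2 - y^2)}"
      unfolding L2 by (auto simp: eqv)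
    have M2: "focus_locus x0 v0 = {(r * cos \<theta>, r * sin \<theta>) | r \<theta>.
           -(pi/4) \<le> \<theta> \<and> \<theta> \<le> pi/4 \<and> r^2 = 2 * x0^2 * cos (2 * \<theta>)}"
      unfolding M1 lemn_set[OF x0] ..
    have M3: "\<forall>\<alpha>. -(pi/2) \<le> \<alpha> \<and> \<alpha> \<le> pi/2 \<longrightarrow>
           (\<exists>F'. foci_of (E_curve x0 v0 \<alpha>)
                   (sqrt (2 * x0^2 * cos \<alpha>) * cos (\<alpha>/2), sqrt (2 * x0^2 * cos \<alpha>) * sin (\<alpha>/2)) F')"
    proof (intro allI impI)
      fix a :: real assume a: "-(pi/2) \<le> a \<and> a \<le> pi/2"
      have ca: "cos a \<ge> 0" using a by (intro cos_ge_zero) auto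
      define \<rho> where "\<rho> = sqrt (2 * x0^2 * cos a)"
      have r2: "\<rho>^2 = 2 * x0^2 * cos a" unfolding \<rho>_def using ca by simp
      have ch: "cos a = (cos (a/2))^2 - (sin (a/2))^2" using cos_double[of "a/2"] by simp
      have sh: "sin a = 2 * sin (a/2) * cos (a/2)" using sin_double[of "a/2"] by simp
      have sc: "(sin a)^2 + (cos a)^2 = 1" by simp
      have e1: "(\<rho> * cos (a/2))^2 - (\<rho> * sin (a/2))^2 = x0^2 + (v0 * cos a)^2 - (v0 * sin a)^2"
        using r2[THEN eq0] ch[THEN eq0] sc[THEN eq0] unfolding eqv by algebra
      have e2: "(\<rho> * cos (a/2)) * (\<rho> * sin (a/2)) = (v0 * cos a) * (v0 * sin a)"
        using r2[THEN eq0] sh[THEN eq0] unfolding eqv by algebra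
      have "foci_of (E_curve x0 v0 a) (\<rho> * cos (a/2), \<rho> * sin (a/2)) (-(\<rho> * cos (a/2)), -(\<rho> * sin (a/2)))"
        unfolding E_Ec by (rule LA[OF x0 e1 e2])
      thus "\<exists>F'. foci_of (E_curve x0 v0 a)
                   (sqrt (2 * x0^2 * cos a) * cos (a/2), sqrt (2 * x0^2 * cos a) * sin (a/2)) F'"
        unfolding \<rho>_def by blast
    qed
    have M4: "focus_locus x0 v0 = {(r * cos (\<alpha>/2), r * sin (\<alpha>/2)) | r \<alpha>.
           -(pi/2) \<le> \<alpha> \<and> \<alpha> \<le> pi/2 \<and> r^2 = 2 * x0^2 * cos \<alpha>}"
      unfolding M2 alpha_set ..
    show "focus_locus x0 v0 = {(x, y). (x^2 + y^2)^2 = 2 * x0^2 * (x^2 - y^2)}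
      \<and> focus_locus x0 v0 = {(r * cos \<theta>, r * sin \<theta>) | r \<theta>.
           -(pi/4) \<le> \<theta> \<and> \<theta> \<le> pi/4 \<and> r^2 = 2 * x0^2 * cos (2 * \<theta>)}
      \<and> (\<forall>\<alpha>. -(pi/2) \<le> \<alpha> \<and> \<alpha> \<le> pi/2 \<longrightarrow>
           (\<exists>F'. foci_of (E_curve x0 v0 \<alpha>)
                   (sqrt (2 * x0^2 * cos \<alpha>) * cos (\<alpha>/2), sqrt (2 * x0^2 * cos \<alpha>) * sin (\<alpha>/2)) F'))
      \<and> focus_locus x0 v0 = {(r * cos (\<alpha>/2), r * sin (\<alpha>/2)) | r \<alpha>.
           -(pi/2) \<le> \<alpha> \<and> \<alpha> \<le> pi/2 \<and> r^2 = 2 * x0^2 * cos \<alpha>}"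
      using M1 M2 M3 M4 by blast
  qed
  show ?thesis using L1 L2 L3 L4 L5 L6 by blast
qed

end
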